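(* Let $q\ge 7$ and $s\in[1,7]$ be integers, $C$ a finite set with $|C|=2q+s$, and $M\in\mathcal M(6,q,C)$. If $\{i,k\}\subseteq\{1,\dots,6\}$ with $i\ne k$ and $r(i,k)\ge 1$, then $r(i,k)+r_{3+}(i,k)\le 8-s$.
   Context: $\mathcal M(6,q,C)$ is the set of $6\times q$ matrices $M$ with entries from $C$ such that each row has $q$ pairwise distinct entries, each column has $6$ pairwise distinct entries, and every pair of distinct colours of $C$ appears together in some row or some column of $M$. The frequency of a colour is the number of entries of $M$ equal to it. For rows $i\ne k$, $r(i,k)$ is the number of colours of frequency exactly $2$ appearing in both row $i$ and row $k$, and $r_{3+}(i,k)$ is the number of colours of frequency at least $3$ appearing in both row $i$ and row $k$. *)

theory Defs
  imports Main
begin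

text \<open>Rows are indexed 0..5 (corresponding to 1..6 in the paper).\<close>

definition in_M6 :: "nat \<Rightarrow> 'c set \<Rightarrow> (nat \<Rightarrow> nat \<Rightarrow> 'c) \<Rightarrow> bool" where
  "in_M6 q C M \<longleftrightarrow>
     (\<forall>i<6. \<forall>j<q. M i j \<in> C) \<and>
     (\<forall>i<6. inj_on (M i) {..<q}) \<and>
     (\<forall>j<q. inj_on (\<lambda>i. M i j) {..<6}) \<and>
     (\<forall>a\<in>C. \<forall>b\<in>C. a \<noteq> b \<longrightarrow>
        (\<exists>i<6. a \<in> M i ` {..<q} \<and> b \<in> M i ` {..<q}) \<or>
        (\<exists>j<q. a \<in> (\<lambda>i. M i j) ` {..<6} \<and> b \<in> (\<lambda>i. M i j) ` {..<6}))"

definition freq :: "nat \<Rightarrow> (nat \<Rightarrow> nat \<Rightarrow> 'c) \<Rightarrow> 'c \<Rightarrow> nat" where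
  "freq q M c = card {(i, j). i < 6 \<and> j < q \<and> M i j = c}"

definition row_set :: "nat \<Rightarrow> (nat \<Rightarrow> nat \<Rightarrow> 'c) \<Rightarrow> nat \<Rightarrow> 'c set" where
  "row_set q M i = M i ` {..<q}"

definition r2 :: "nat \<Rightarrow> (nat \<Rightarrow> nat \<Rightarrow> 'c) \<Rightarrow> nat \<Rightarrow> nat \<Rightarrow> nat" where
  "r2 q M i k = card {c \<in> row_set q M i \<inter> row_set q M k. freq q M c = 2}"

definition r3p :: "nat \<Rightarrow> (nat \<Rightarrow> nat \<Rightarrow> 'c) \<Rightarrow> nat \<Rightarrow> nat \<Rightarrow> nat" where
  "r3p q M i k = card {c \<in> row_set q M i \<inter> row_set q M k. freq q M c \<ge> 3}"

end

theory Submission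
  imports Defs
begin

theorem claim2:
  fixes q s :: nat and C :: "'c set" and M :: "nat \<Rightarrow> nat \<Rightarrow> 'c" and i k :: nat
  assumes "q \<ge> 7" and "1 \<le> s" and "s \<le> 7"
    and "finite C" and "card C = 2 * q + s"
    and "in_M6 q C M"
    and "i < 6" and "k < 6" and "i \<noteq> k"
    and "r2 q M i k \<ge> 1"
  shows "r2 q M i k + r3p q M i k \<le> 8 - s"
proof -
  note M = assms(6)[unfolded in_M6_def]
  define Ri where "Ri = row_set q M i"
  define Rk where "Rk = row_set q M k"
  define T where "T = Ri \<inter> Rk"
  have fRi: "finite Ri" and fRk: "finite Rk" unfolding Ri_def Rk_def row_set_def by auto
  have cRi: "card Ri = q" unfolding Ri_def row_set_def using M assms(7) by (simp add: card_image)
  have cRk: "card Rk = q" unfolding Rk_def row_set_def using M assms(8) by (simp add: card_image)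
  have "{c \<in> T. freq q M c = 2} \<noteq> {}"
    using assms(10) unfolding r2_def T_def Ri_def Rk_def by (metis card.empty not_one_le_zero)
  then obtain c where cT: "c \<in> T" and fc: "freq q M c = 2" by auto
  obtain j1 where j1: "j1 < q" "M i j1 = c" using cT unfolding T_def Ri_def row_set_def by auto
  obtain j2 where j2: "j2 < q" "M k j2 = c" using cT unfolding T_def Rk_def row_set_def by auto
  define P where "P = {(l, j). l < 6 \<and> j < q \<and> M l j = c}"
  have finP: "finite P" unfolding P_def
    by (rule finite_subset[of _ "{..<6} \<times> {..<q}"]) auto
  have sub: "{(i,j1),(k,j2)} \<subseteq> P" unfolding P_def using j1 j2 assms(7,8) by auto
  have "card {(i,j1),(k,j2)} = 2" using assms(9) by simp
  hence Peq: "P = {(i,j1),(k,j2)}"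
    using fc unfolding freq_def P_def[symmetric]
    by (metis card_subset_eq finP sub)
  define S1 where "S1 = (\<lambda>l. M l j1) ` ({..<6} - {i,k})"
  define S2 where "S2 = (\<lambda>l. M l j2) ` ({..<6} - {i,k})"
  have cS: "card ({..<6::nat} - {i,k}) = 4" using assms(7,8,9) by simp
  have cS1: "card S1 \<le> 4" unfolding S1_def using cS card_image_le[of "{..<6::nat} - {i,k}" "\<lambda>l. M l j1"] by simp
  have cS2: "card S2 \<le> 4" unfolding S2_def using cS card_image_le[of "{..<6::nat} - {i,k}" "\<lambda>l. M l j2"] by simp
  have Csub: "C \<subseteq> (Ri \<union> Rk) \<union> S1 \<union> S2"
  proof
    fix a assume aC: "a \<in> C"
    show "a \<in> (Ri \<union> Rk) \<union> S1 \<union> S2"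
    proof (cases "a = c")
      case True then show ?thesis using cT unfolding T_def by auto
    next
      case False
      have cC: "c \<in> C" using M j1 assms(7) by blast
      from M aC cC False have
        "(\<exists>l<6. c \<in> M l ` {..<q} \<and> a \<in> M l ` {..<q}) \<or>
         (\<exists>j<q. c \<in> (\<lambda>l. M l j) ` {..<6} \<and> a \<in> (\<lambda>l. M l j) ` {..<6})"
        by metis
      then show ?thesis
      proof
        assume "\<exists>l<6. c \<in> M l ` {..<q} \<and> a \<in> M l ` {..<q}"
        then obtain l j where l: "l < 6" "j < q" "M l j = c" "a \<in> M l ` {..<q}" by auto
        hence "(l,j) \<in> P" unfolding P_def by auto
        hence "l = i \<or> l = k" using Peq by auto
        then show ?thesis using l unfolding Ri_def Rk_def row_set_def by auto
      next
        assume "\<exists>j<q. c \<in> (\<lambda>l. M l j) ` {..<6} \<and> a \<in> (\<lambda>l. M l j) ` {..<6}"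
        then obtain j l l' where l: "j < q" "l < 6" "M l j = c" "l' < 6" "a = M l' j" by auto
        hence "(l,j) \<in> P" unfolding P_def by auto
        hence jj: "j = j1 \<or> j = j2" using Peq by auto
        show ?thesis
        proof (cases "l' = i \<or> l' = k")
          case True then show ?thesis using l unfolding Ri_def Rk_def row_set_def by auto
        next
          case False then show ?thesis using l jj unfolding S1_def S2_def by auto
        qed
      qed
    qed
  qed
  have "card C \<le> card ((Ri \<union> Rk) \<union> S1 \<union> S2)"
    using Csub fRi fRk unfolding S1_def S2_def by (intro card_mono) auto
  also have "\<dots> \<le> card (Ri \<union> Rk) + card S1 + card S2"
    by (meson card_Un_le add_le_mono order_trans le_refl)
  finally have A: "card C \<le> card (Ri \<union> Rk) + 8" using cS1 cS2 by linarith
  have B: "card Ri + card Rk = card (Ri \<union> Rk) + card T"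
    unfolding T_def using card_Un_Int[OF fRi fRk] .
  have tle: "card T \<le> 8 - s" using A B cRi cRk assms(5) by linarith
  have fT: "finite T" unfolding T_def using fRi by auto
  have "r2 q M i k + r3p q M i k = card ({c \<in> T. freq q M c = 2} \<union> {c \<in> T. freq q M c \<ge> 3})"
    unfolding r2_def r3p_def T_def[symmetric] Ri_def[symmetric] Rk_def[symmetric]
    using fT by (subst card_Un_disjoint) auto
  also have "\<dots> \<le> card T" using fT by (intro card_mono) auto
  finally show ?thesis using tle by linarith
qed

end
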